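(* Let $p\neq 3$ be a prime, let $r\geq 7$, and let $C(x_1,\ldots,x_r)=a_1x_1^3+a_2x_2^3+\cdots+a_rx_r^3$ with $a_1,\ldots,a_r$ integers and $a_1a_2\cdots a_r\neq 0$. Then $R(C)$ is dense in $\mathbb{Q}_p$.
   Context: For an integral form $F$ in $r$ variables, $R(F)=\{F(\overline{x})/F(\overline{y}):\overline{x},\overline{y}\in\mathbb{Z}^r,\ F(\overline{y})\neq 0\}$, viewed as a subset of the field $\mathbb{Q}_p$ of $p$-adic numbers with its $p$-adic topology. *)

theory Defs
  imports Complex_Main "HOL-Computational_Algebra.Computational_Algebra"
begin

definition padic_val :: "nat \<Rightarrow> rat \<Rightarrow> int" where
  "padic_val p q = (case quotient_of q of (a, b) \<Rightarrow>
      int (multiplicity (int p) a) - int (multiplicity (int p) b))"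

definition padic_abs :: "nat \<Rightarrow> rat \<Rightarrow> real" where
  "padic_abs p q = (if q = 0 then 0 else real p powr (- real_of_int (padic_val p q)))"

(* R(F) = { F(x)/F(y) : x, y in Z^r, F(y) \<noteq> 0 } for a form F : Z^r -> Z,
   integer vectors of length r represented as functions nat => int (only
   coordinates i < r matter for the forms considered) *)
definition ratio_set :: "((nat \<Rightarrow> int) \<Rightarrow> int) \<Rightarrow> rat set" where
  "ratio_set F = {of_int (F x) / of_int (F y) | x y. F y \<noteq> 0}"

definition diag_cubic :: "nat \<Rightarrow> (nat \<Rightarrow> int) \<Rightarrow> (nat \<Rightarrow> int) \<Rightarrow> int" where
  "diag_cubic r a x = (\<Sum>i<r. a i * x i ^ 3)"

(* A set S of rationals is dense in Q_p.  Since Q is dense in Q_p, this holds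
   iff every rational can be approximated arbitrarily well p-adically by
   elements of S. *)
definition padic_dense :: "nat \<Rightarrow> rat set \<Rightarrow> bool" where
  "padic_dense p S \<longleftrightarrow> (\<forall>q::rat. \<forall>e::real. e > 0 \<longrightarrow> (\<exists>s\<in>S. padic_abs p (s - q) < e))"

end

theory Submission
  imports Defs "HOL-Number_Theory.Number_Theory"
begin


lemma diag_upd:
  assumes "i < r"
  shows "diag_cubic r a (w(i := t)) = diag_cubic r a w - a i * w i ^ 3 + a i * t ^ 3"
proof -
  have "diag_cubic r a (w(i := t)) = a i * t ^ 3 + (\<Sum>j\<in>{..<r} - {i}. a j * w j ^ 3)"
    unfolding diag_cubic_def using assms by (subst sum.remove[of _ i]) auto
  moreover have "diag_cubic r a w = a i * w i ^ 3 + (\<Sum>j\<in>{..<r} - {i}. a j * w j ^ 3)"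
    unfolding diag_cubic_def using assms by (subst sum.remove[of _ i]) auto
  ultimately show ?thesis by simp
qed

lemma padic_abs_bound:
  fixes p j :: nat and Z D :: int
  assumes p: "prime p" and D: "\<not> int p dvd D"
  shows "padic_abs p (of_int (int p ^ j * Z) / of_int D) \<le> 1 / real p ^ j"
proof (cases "Z = 0")
  case True thus ?thesis by (simp add: padic_abs_def)
next
  case False
  have D0: "D \<noteq> 0" using D by auto
  define q where "q = (of_int (int p ^ j * Z) / of_int D :: rat)"
  have q0: "q \<noteq> 0" using False D0 p unfolding q_def by (auto simp: prime_gt_0_nat)
  obtain A B where qo: "quotient_of q = (A, B)" by (cases "quotient_of q")
  have B0: "B > 0" using qo by (rule quotient_of_denom_pos)
  have cop: "coprime A B" using qo by (rule quotient_of_coprime)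
  have qAB: "q = of_int A / of_int B" using qo by (rule quotient_of_div)
  have eq: "A * D = int p ^ j * Z * B"
  proof -
    have "(of_int A / of_int B :: rat) = of_int (int p ^ j * Z) / of_int D"
      using qAB q_def by simp
    hence "(of_int (A * D) :: rat) = of_int (int p ^ j * Z * B)"
      using B0 D0 by (simp add: field_simps)
    thus ?thesis by (simp only: of_int_eq_iff)
  qed
  have A0: "A \<noteq> 0" using qAB q0 by auto
  have "B dvd A * D" using eq by simp
  hence "B dvd D" using cop by (simp add: coprime_commute coprime_dvd_mult_right_iff)
  hence Bp: "\<not> int p dvd B" using D dvd_trans by blast
  have pi: "prime (int p)" using p by simp
  have "coprime (int p) D" using D pi by (simp add: prime_imp_coprime)
  hence "coprime (int p ^ j) D" by simp
  moreover have "int p ^ j dvd A * D" using eq by simp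
  ultimately have "int p ^ j dvd A" by (simp add: coprime_dvd_mult_left_iff)
  hence mA: "multiplicity (int p) A \<ge> j"
  proof -
    have "\<not> is_unit (int p)" using pi not_prime_unit by blast
    thus ?thesis using multiplicity_geI[OF A0] \<open>int p ^ j dvd A\<close> by blast
  qed
  have mB: "multiplicity (int p) B = 0" using Bp by (simp add: not_dvd_imp_multiplicity_0)
  have val: "padic_val p q \<ge> int j" unfolding padic_val_def qo using mA mB by simp
  have p1: "real p > 1" using p prime_gt_1_nat by auto
  have "padic_abs p q = real p powr (- real_of_int (padic_val p q))"
    using q0 by (simp add: padic_abs_def)
  also have "\<dots> \<le> real p powr (- real j)"
    using val p1 by (intro powr_mono) auto
  also have "\<dots> = 1 / real p ^ j" using p1 by (simp add: powr_minus powr_realpow divide_inverse)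
  finally show ?thesis unfolding q_def .
qed

lemma hensel_step:
  fixes p :: nat and a w :: "nat \<Rightarrow> int"
  assumes p: "prime p" "p \<noteq> 3" and i: "i < r" and K: "K \<ge> 1"
    and wu: "a i * w i ^ 3 = int p ^ e * u" and u: "\<not> int p dvd u"
    and dv: "int p ^ (K + e) dvd diag_cubic r a w"
  shows "\<exists>w' u'. a i * w' i ^ 3 = int p ^ e * u' \<and> \<not> int p dvd u' \<and>
     int p ^ (Suc K + e) dvd diag_cubic r a w'"
proof -
  have pi: "prime (int p)" using p by simp
  obtain c where c: "diag_cubic r a w = int p ^ (K + e) * c" using dv by blast
  have p3: "\<not> int p dvd 3"
  proof
    assume "int p dvd 3"
    hence "int p dvd int 3" by simp
    hence "p dvd 3" by (simp only: int_dvd_int_iff)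
    have "prime (3::nat)" unfolding prime_nat_iff'
    proof (intro conjI ballI)
      fix n :: nat assume "n \<in> {2..<3}"
      hence "n = 2" by auto
      thus "\<not> n dvd 3" by simp
    qed simp
    hence "p = 3" using \<open>p dvd 3\<close> p(1) primes_dvd_imp_eq by blast
    thus False using p by auto
  qed
  have "\<not> int p dvd 3 * u" using p3 u pi by (simp add: prime_dvd_mult_iff)
  hence "coprime (int p) (3 * u)" using pi by (intro prime_imp_coprime)
  hence "coprime (3 * u) (int p)" by (simp only: coprime_commute)
  then obtain t where t: "[3 * u * t = 1] (mod int p)" using cong_solve_coprime_int by blast
  define s where "s = - c * t"
  have cs: "int p dvd c + 3 * u * s"
  proof -
    have "[c + 3 * u * s = c + (-c) * (3 * u * t)] (mod int p)" unfolding s_def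
      by (simp add: algebra_simps)
    also have "[c + (-c) * (3 * u * t) = c + (-c) * 1] (mod int p)"
      by (intro cong_add cong_mult cong_refl t)
    finally show ?thesis by (simp add: cong_0_iff)
  qed
  define P where "P = int p ^ K"
  have pP: "int p dvd P" unfolding P_def using K by (simp add: dvd_power)
  define w' where "w' = w(i := w i * (1 + P * s))"
  define u' where "u' = u * (1 + P * s) ^ 3"
  have "a i * w' i ^ 3 = (a i * w i ^ 3) * (1 + P * s) ^ 3" unfolding w'_def
    by (simp add: power_mult_distrib)
  hence "a i * w' i ^ 3 = int p ^ e * u'" unfolding u'_def wu by simp
  moreover have "\<not> int p dvd u'"
  proof
    assume "int p dvd u'"
    hence "int p dvd u \<or> int p dvd (1 + P * s) ^ 3" unfolding u'_def using pi by (simp add: prime_dvd_mult_iff)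
    hence "int p dvd 1 + P * s" using u pi by (meson prime_dvd_power)
    moreover have "int p dvd P * s" using pP by simp
    ultimately have "int p dvd (1 + P * s) - P * s" by (rule dvd_diff)
    hence "int p dvd 1" by simp
    thus False using pi by (simp add: prime_int_iff)
  qed
  moreover have "int p ^ (Suc K + e) dvd diag_cubic r a w'"
  proof -
    have "diag_cubic r a w' = diag_cubic r a w - a i * w i ^ 3 + a i * (w i * (1 + P * s)) ^ 3"
      unfolding w'_def by (rule diag_upd[OF i])
    also have "\<dots> = diag_cubic r a w + a i * w i ^ 3 * ((1 + P * s) ^ 3 - 1)"
      by (simp add: power_mult_distrib right_diff_distrib)
    also have "\<dots> = P * int p ^ e * (c + 3 * u * s + P * (3 * u * s^2 + P * u * s ^ 3))"
    proof -
      have "int p ^ (K + e) = P * int p ^ e" by (simp add: P_def power_add)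
      hence "diag_cubic r a w = P * int p ^ e * c" using c by simp
      thus ?thesis unfolding wu by (simp add: power3_eq_cube power2_eq_square algebra_simps)
    qed
    finally have eq: "diag_cubic r a w' = P * int p ^ e * (c + 3 * u * s + P * (3 * u * s^2 + P * u * s ^ 3))" .
    have "int p dvd c + 3 * u * s + P * (3 * u * s^2 + P * u * s ^ 3)"
      using cs pP by simp
    then obtain d where "c + 3 * u * s + P * (3 * u * s^2 + P * u * s ^ 3) = int p * d" by blast
    hence "diag_cubic r a w' = int p ^ (Suc K + e) * d" unfolding eq P_def by (simp add: power_add)
    thus ?thesis by simp
  qed
  ultimately show ?thesis by blast
qed

lemma hensel:
  fixes p :: nat and a w0 :: "nat \<Rightarrow> int"
  assumes p: "prime p" "p \<noteq> 3" and i: "i < r"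
    and wu: "a i * w0 i ^ 3 = int p ^ e * u0" and u: "\<not> int p dvd u0"
    and dv: "int p ^ (1 + e) dvd diag_cubic r a w0"
    and K: "K \<ge> 1"
  shows "\<exists>w u. a i * w i ^ 3 = int p ^ e * u \<and> \<not> int p dvd u \<and>
     int p ^ (K + e) dvd diag_cubic r a w"
  using K
proof (induction K rule: dec_induct)
  case base thus ?case using wu u dv by blast
next
  case (step K)
  then obtain w u where "a i * w i ^ 3 = int p ^ e * u" "\<not> int p dvd u"
     "int p ^ (K + e) dvd diag_cubic r a w" by blast
  from hensel_step[OF p i _ this] step(1) show ?case by auto
qed

lemma dense_from_zero:
  fixes p :: nat and a w0 :: "nat \<Rightarrow> int"
  assumes p: "prime p" "p \<noteq> 3" and i: "i < r"
    and wu0: "a i * w0 i ^ 3 = int p ^ e * u0" and u0: "\<not> int p dvd u0"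
    and dv0: "int p ^ (1 + e) dvd diag_cubic r a w0"
  shows "padic_dense p (ratio_set (diag_cubic r a))"
  unfolding padic_dense_def
proof (intro allI impI)
  fix q :: rat and \<epsilon> :: real
  assume eps: "\<epsilon> > 0"
  define C where "C = diag_cubic r a"
  have pi: "prime (int p)" using p by simp
  have p1: "real p > 1" using p prime_gt_1_nat by auto
  obtain N where N: "1 / \<epsilon> < real p ^ N" using real_arch_pow[OF p1] by blast
  obtain m n where qo: "quotient_of q = (m, n)" by (cases "quotient_of q")
  have n0: "n > 0" using qo by (rule quotient_of_denom_pos)
  have qmn: "q = of_int m / of_int n" using qo by (rule quotient_of_div)
  define k where "k = multiplicity (int p) n"
  have nu: "\<not> is_unit (int p)" using pi not_prime_unit by blast
  obtain n' where n': "n = int p ^ k * n'" "\<not> int p dvd n'"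
    using multiplicity_decompose'[of n "int p"] n0 nu unfolding k_def by auto
  define M where "M = 2 * k + Suc N"
  have M1: "M \<ge> 1" unfolding M_def by simp
  obtain w u where wu: "a i * w i ^ 3 = int p ^ e * u" and u: "\<not> int p dvd u"
      and dv: "int p ^ (2 * M + e) dvd C w"
    using hensel[OF p i wu0 u0 dv0, of "2 * M"] M1 unfolding C_def by auto
  obtain c where c: "C w = int p ^ (2 * M + e) * c" using dv by blast
  define A where "A = int p ^ k"
  define B where "B = int p ^ Suc N"
  define E where "E = int p ^ e"
  have PM: "int p ^ M = A * A * B" unfolding A_def B_def M_def by (simp add: power_add mult_2)
  have c': "C w = E * (A * A * B) * (A * A * B) * c"
    unfolding c E_def PM[symmetric] by (simp add: power_add mult_2)
  define x where "x = w(i := w i * (1 + int p ^ M * m))"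
  define y where "y = w(i := w i * (1 + int p ^ M * n))"
  have Cupd: "C (w(i := w i * (1 + int p ^ M * t))) =
      E * (A * A * B) * (3 * u * t + (A * A * B) * (c + 3 * u * t^2 + (A * A * B) * u * t ^ 3))" for t
  proof -
    have "C (w(i := w i * (1 + int p ^ M * t))) = C w - a i * w i ^ 3 + a i * (w i * (1 + int p ^ M * t)) ^ 3"
      unfolding C_def by (rule diag_upd[OF i])
    also have "\<dots> = C w + (a i * w i ^ 3) * ((1 + int p ^ M * t) ^ 3 - 1)"
      by (simp add: power_mult_distrib right_diff_distrib)
    also have "\<dots> = E * (A * A * B) * (3 * u * t + (A * A * B) * (c + 3 * u * t^2 + (A * A * B) * u * t ^ 3))"
      unfolding c' wu PM E_def[symmetric] by (simp add: power3_eq_cube power2_eq_square algebra_simps)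
    finally show ?thesis .
  qed
  define X where "X = 3 * u * m + (A * A * B) * (c + 3 * u * m^2 + (A * A * B) * u * m ^ 3)"
  define Y' where "Y' = 3 * u * n' + (A * B) * (c + 3 * u * n^2 + (A * A * B) * u * n ^ 3)"
  have Cx: "C x = E * (A * A * B) * X" unfolding x_def X_def by (rule Cupd)
  have Cy: "C y = E * (A * A * B) * (A * Y')" unfolding y_def Y'_def Cupd n'(1) A_def[symmetric]
    by (simp add: algebra_simps)
  have p3: "\<not> int p dvd 3"
  proof
    assume "int p dvd 3"
    hence "int p dvd int 3" by simp
    hence "p dvd 3" by (simp only: int_dvd_int_iff)
    have "prime (3::nat)" unfolding prime_nat_iff'
    proof (intro conjI ballI)
      fix n :: nat assume "n \<in> {2..<3}"
      hence "n = 2" by auto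
      thus "\<not> n dvd 3" by simp
    qed simp
    hence "p = 3" using \<open>p dvd 3\<close> p(1) primes_dvd_imp_eq by blast
    thus False using p by auto
  qed
  have Y'p: "\<not> int p dvd Y'"
  proof
    assume h: "int p dvd Y'"
    have "int p dvd A * B" unfolding B_def by simp
    hence "int p dvd (A * B) * (c + 3 * u * n^2 + (A * A * B) * u * n ^ 3)" by (rule dvd_mult2)
    hence "int p dvd Y' - (A * B) * (c + 3 * u * n^2 + (A * A * B) * u * n ^ 3)" using h by (intro dvd_diff)
    hence "int p dvd 3 * u * n'" unfolding Y'_def by simp
    thus False using p3 u n'(2) pi by (simp add: prime_dvd_mult_iff)
  qed
  have E0: "E \<noteq> 0" and A0: "A \<noteq> 0" and B0: "B \<noteq> 0" and Y'0: "Y' \<noteq> 0"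
    using p prime_gt_0_nat Y'p unfolding E_def A_def B_def by auto
  have Cy0: "C y \<noteq> 0" unfolding Cy using E0 A0 B0 Y'0 by simp
  define Z where "Z = (n - m) * c + 3 * u * m * n * (m - n) + (A * A * B) * u * m * n * (m^2 - n^2)"
  have key: "(C x * n - m * C y) * (n' * Y') = (B * Z) * (C y * n)"
    unfolding Cx Cy X_def Y'_def Z_def n'(1) A_def[symmetric]
    by (simp add: power2_eq_square power3_eq_cube algebra_simps)
  define s where "s = (of_int (C x) / of_int (C y) :: rat)"
  have sR: "s \<in> ratio_set C" unfolding s_def ratio_set_def using Cy0 by blast
  have n'0: "n' \<noteq> 0" using n'(2) by auto
  have "s - q = of_int (B * Z) / of_int (n' * Y')"
  proof -
    have "s - q = (of_int (C x * n - m * C y)) / of_int (C y * n)"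
      unfolding s_def qmn using Cy0 n0 by (simp add: field_simps)
    also have "\<dots> = of_int (B * Z) / of_int (n' * Y')"
    proof (rule iffD2[OF frac_eq_eq])
      show "rat_of_int (C y * n) \<noteq> 0" "rat_of_int (n' * Y') \<noteq> 0" using Cy0 n0 n'0 Y'0 by auto
      have "rat_of_int ((C x * n - m * C y) * (n' * Y')) = rat_of_int ((B * Z) * (C y * n))"
        using key by simp
      thus "rat_of_int (C x * n - m * C y) * rat_of_int (n' * Y') = rat_of_int (B * Z) * rat_of_int (C y * n)"
        by (simp only: of_int_mult)
    qed
    finally show ?thesis .
  qed
  hence "padic_abs p (s - q) \<le> 1 / real p ^ Suc N"
    unfolding B_def using padic_abs_bound[OF p(1), of "n' * Y'" "Suc N" Z] n'(2) Y'p pi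
    by (simp add: prime_dvd_mult_iff)
  also have "\<dots> < \<epsilon>"
  proof -
    have "real p ^ N \<le> real p ^ Suc N" using p1 by (intro power_increasing) auto
    hence "1 / \<epsilon> < real p ^ Suc N" using N by linarith
    thus ?thesis using eps p1 by (simp add: field_simps)
  qed
  finally show "\<exists>s\<in>ratio_set C. padic_abs p (s - q) < \<epsilon>" using sR by blast
qed




lemma fermat_int:
  fixes p :: nat and t :: int
  assumes p: "prime p" and t: "\<not> int p dvd t"
  shows "[t ^ (p - 1) = 1] (mod int p)"
proof -
  define s where "s = nat (t mod int p)"
  have p0: "int p > 0" using p prime_gt_0_nat by simp
  have st: "int s = t mod int p" unfolding s_def using p0 by simp
  have "\<not> p dvd s"
  proof
    assume "p dvd s"
    hence "int p dvd int s" by simp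
    hence "int p dvd t mod int p" using st by simp
    thus False using t by (simp add: dvd_mod_iff)
  qed
  hence "[s ^ (p - 1) = 1] (mod p)" using p fermat_theorem by blast
  hence "[int (s ^ (p - 1)) = int 1] (mod int p)" by (simp only: cong_int_iff)
  hence "[int s ^ (p - 1) = 1] (mod int p)" by simp
  moreover have "[int s = t] (mod int p)" using st by (simp add: cong_def)
  hence "[int s ^ (p - 1) = t ^ (p - 1)] (mod int p)" by (rule cong_pow)
  ultimately show ?thesis by (meson cong_sym cong_trans)
qed

lemma inverse_int:
  fixes p :: nat and t :: int
  assumes p: "prime p" and t: "\<not> int p dvd t"
  shows "\<exists>v. [t * v = 1] (mod int p)"
proof -
  have pi: "prime (int p)" using p by simp
  have "coprime (int p) t" using pi t by (intro prime_imp_coprime)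
  hence "coprime t (int p)" by (simp only: coprime_commute)
  thus ?thesis by (rule cong_solve_coprime_int)
qed

lemma all_cubes_2:
  fixes p :: nat and t :: int
  assumes p: "prime p" and p2: "p mod 3 = 2" and t: "\<not> int p dvd t"
  shows "\<exists>y. [y ^ 3 = t] (mod int p)"
proof -
  define k where "k = (2 * p - 1) div 3"
  have p1: "p \<ge> 2" using p prime_ge_2_nat by blast
  have k3: "3 * k = 2 * (p - 1) + 1" unfolding k_def using p2 p1 by presburger
  have f: "[t ^ (p - 1) = 1] (mod int p)" using p t by (rule fermat_int)
  have "(t ^ k) ^ 3 = t * (t ^ (p - 1)) ^ 2"
    by (simp add: power_mult[symmetric] mult.commute[of k 3] k3 power_add mult.commute[of 2])
  also have "[t * (t ^ (p - 1)) ^ 2 = t * 1 ^ 2] (mod int p)"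
    by (intro cong_mult cong_pow cong_refl f)
  finally show ?thesis by auto
qed

lemma arith3:
  fixes a b c :: nat
  assumes "a < 3" "b < 3" "c < 3"
  shows "a \<noteq> (a + b) mod 3 \<Longrightarrow> a \<noteq> (a + c) mod 3 \<Longrightarrow> (a + b) mod 3 \<noteq> (a + c) mod 3 \<Longrightarrow>
    (b = 1 \<or> b = 2) \<and> c = (2 * b) mod 3"
proof -
  have "a = 0 \<or> a = 1 \<or> a = 2" "b = 0 \<or> b = 1 \<or> b = 2" "c = 0 \<or> c = 1 \<or> c = 2"
    using assms by auto
  thus "a \<noteq> (a + b) mod 3 \<Longrightarrow> a \<noteq> (a + c) mod 3 \<Longrightarrow> (a + b) mod 3 \<noteq> (a + c) mod 3 \<Longrightarrow>
    (b = 1 \<or> b = 2) \<and> c = (2 * b) mod 3" by (elim disjE) simp_all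
qed

definition cls :: "nat \<Rightarrow> nat \<Rightarrow> int \<Rightarrow> nat" where
  "cls p g t = (SOME k. [int g ^ k = t] (mod int p)) mod 3"

context
  fixes p g :: nat
  assumes P: "prime p" and G: "residue_primroot p g" and M3: "p mod 3 = 1"
begin

lemma pi: "prime (int p)" using P by simp

lemma g_cop: "coprime p g" using G by (simp add: residue_primroot_def)

lemma g_unit: "\<not> int p dvd int g"
proof
  assume "int p dvd int g"
  hence "p dvd g" by (simp only: int_dvd_int_iff)
  hence "is_unit p" using coprime_common_divisor[OF g_cop dvd_refl] by blast
  thus False using P not_prime_unit by blast
qed

lemma gen:
  assumes t: "\<not> int p dvd t"
  shows "\<exists>k. [int g ^ k = t] (mod int p)"
proof -
  have p1: "p > 1" using P prime_gt_1_nat by blast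
  define s where "s = nat (t mod int p)"
  have st: "int s = t mod int p" unfolding s_def using p1 by simp
  have s0: "s > 0"
  proof (rule ccontr)
    assume "\<not> s > 0"
    hence "t mod int p = 0" using st by simp
    thus False using t by (simp add: dvd_eq_mod_eq_0)
  qed
  have "int s < int p" using st p1 by simp
  hence sp: "s \<le> p" by simp
  have "\<not> p dvd s"
  proof
    assume "p dvd s"
    hence "int p dvd int s" by simp
    hence "int p dvd t mod int p" using st by simp
    thus False using t by (simp add: dvd_mod_iff)
  qed
  hence "coprime p s" using P by (intro prime_imp_coprime)
  hence "s \<in> totatives p" using s0 sp by (simp add: in_totatives_iff coprime_commute)
  moreover have "bij_betw (\<lambda>i. g ^ i mod p) {..<totient p} (totatives p)"
    using residue_primroot_is_generator[OF p1 G] .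
  ultimately have "s \<in> (\<lambda>i. g ^ i mod p) ` {..<totient p}" by (simp add: bij_betw_def)
  then obtain i where "s = g ^ i mod p" by blast
  hence "int (g ^ i mod p) = t mod int p" using st by simp
  hence "int g ^ i mod int p = t mod int p" by (simp add: of_nat_mod)
  thus ?thesis by (auto simp: cong_def)
qed

lemma exp_cong:
  assumes "[int g ^ a = int g ^ b] (mod int p)"
  shows "[a = b] (mod 3)"
proof -
  have "[int (g ^ a) = int (g ^ b)] (mod int p)" using assms by simp
  hence "[g ^ a = g ^ b] (mod p)" by (simp only: cong_int_iff)
  hence "[a = b] (mod (ord p g))" using order_divides_expdiff[OF g_cop] by blast
  moreover have "ord p g = p - 1" using G P by (simp add: residue_primroot_def totient_prime)
  moreover have "3 dvd p - 1" using M3 by presburger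
  ultimately show ?thesis using cong_dvd_modulus_nat by metis
qed

lemma cls_eq:
  assumes "[int g ^ k = t] (mod int p)"
  shows "cls p g t = k mod 3"
proof -
  have "\<exists>k. [int g ^ k = t] (mod int p)" using assms by blast
  hence "[int g ^ (SOME k. [int g ^ k = t] (mod int p)) = t] (mod int p)" by (rule someI_ex)
  hence "[int g ^ k = int g ^ (SOME k. [int g ^ k = t] (mod int p))] (mod int p)"
    using assms by (meson cong_sym cong_trans)
  hence "[k = (SOME k. [int g ^ k = t] (mod int p))] (mod 3)" by (rule exp_cong)
  thus ?thesis unfolding cls_def by (simp add: cong_def)
qed

lemma cls_lt: "cls p g t < 3" unfolding cls_def by simp

lemma cls_mult:
  assumes s: "\<not> int p dvd s" and t: "\<not> int p dvd t"
  shows "cls p g (s * t) = (cls p g s + cls p g t) mod 3"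
proof -
  obtain a where a: "[int g ^ a = s] (mod int p)" using gen[OF s] by blast
  obtain b where b: "[int g ^ b = t] (mod int p)" using gen[OF t] by blast
  have "[int g ^ (a + b) = s * t] (mod int p)" using cong_mult[OF a b] by (simp add: power_add)
  hence "cls p g (s * t) = (a + b) mod 3" by (rule cls_eq)
  thus ?thesis using cls_eq[OF a] cls_eq[OF b] by (simp add: mod_add_eq)
qed

lemma cls_cong:
  assumes "[s = t] (mod int p)" and t: "\<not> int p dvd t"
  shows "cls p g s = cls p g t"
proof -
  obtain k where k: "[int g ^ k = t] (mod int p)" using gen[OF t] by blast
  hence "[int g ^ k = s] (mod int p)" using assms(1) by (meson cong_sym cong_trans)
  thus ?thesis using cls_eq k by simp
qed

lemma cls_cube:
  assumes y: "\<not> int p dvd y"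
  shows "cls p g (y ^ 3) = 0"
proof -
  obtain k where k: "[int g ^ k = y] (mod int p)" using gen[OF y] by blast
  have "[int g ^ (3 * k) = y ^ 3] (mod int p)" using cong_pow[OF k, of 3]
    by (simp add: power_mult[symmetric] mult.commute)
  thus ?thesis using cls_eq by simp
qed

lemma cls_neg1: "cls p g (-1) = 0"
proof -
  have "\<not> int p dvd 1" using pi by (simp add: prime_int_iff)
  hence "cls p g ((-1) ^ 3) = 0" by (intro cls_cube) simp
  thus ?thesis by simp
qed

lemma cls_one: "cls p g 1 = 0"
  using cls_eq[of 0 1] by simp

lemma cls_zero_cube:
  assumes t: "\<not> int p dvd t" and c: "cls p g t = 0"
  shows "\<exists>y. [y ^ 3 = t] (mod int p)"
proof -
  obtain k where k: "[int g ^ k = t] (mod int p)" using gen[OF t] by blast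
  hence "k mod 3 = 0" using cls_eq c by simp
  hence kk: "k div 3 * 3 = k" by presburger
  have "(int g ^ (k div 3)) ^ 3 = int g ^ k" by (simp only: power_mult[symmetric] kk)
  hence "[(int g ^ (k div 3)) ^ 3 = t] (mod int p)" using k by simp
  thus ?thesis by blast
qed

lemma cls_match:
  assumes v: "\<not> int p dvd v" and t: "\<not> int p dvd t" and c: "cls p g v = cls p g t"
  shows "\<exists>y. [v * y ^ 3 = t] (mod int p)"
proof -
  obtain iv where iv: "[v * iv = 1] (mod int p)" using inverse_int[OF P v] by blast
  have ivu: "\<not> int p dvd iv"
  proof
    assume "int p dvd iv"
    hence "[v * iv = 0] (mod int p)" by (simp add: cong_0_iff)
    hence "[1 = 0] (mod int p)" using iv by (meson cong_sym cong_trans)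
    thus False using pi by (simp add: cong_0_iff prime_int_iff)
  qed
  have n1: "\<not> int p dvd 1" using pi by (simp add: prime_int_iff)
  have "cls p g (v * iv) = 0" using cls_cong[OF iv n1] cls_one by simp
  hence "(cls p g v + cls p g iv) mod 3 = 0" using cls_mult[OF v ivu] by simp
  hence "cls p g (t * iv) = 0" using cls_mult[OF t ivu] c by simp
  moreover have "\<not> int p dvd t * iv" using t ivu pi by (simp add: prime_dvd_mult_iff)
  ultimately obtain y where y: "[y ^ 3 = t * iv] (mod int p)" using cls_zero_cube by blast
  have "[v * y ^ 3 = v * (t * iv)] (mod int p)" by (intro cong_mult cong_refl y)
  also have "v * (t * iv) = t * (v * iv)" by (simp add: algebra_simps)
  also have "[t * (v * iv) = t * 1] (mod int p)" by (intro cong_mult cong_refl iv)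
  finally show ?thesis by auto
qed


lemma unit_cop: "\<not> int p dvd x \<Longrightarrow> coprime x (int p)"
proof -
  assume "\<not> int p dvd x"
  hence "coprime (int p) x" using pi by (intro prime_imp_coprime)
  thus ?thesis by (simp only: coprime_commute)
qed

lemma cong_range_eq:
  fixes a b :: int
  assumes "[a = b] (mod int p)" "0 \<le> a" "a < int p" "0 \<le> b" "b < int p"
  shows "a = b"
  using assms by (simp add: cong_def)

lemma cyclo:
  assumes d: "d = 1 \<or> d = 2"
  shows "\<exists>\<alpha>. \<not> int p dvd \<alpha> \<and> \<not> int p dvd (1 + \<alpha>) \<and> cls p g \<alpha> = d \<and> cls p g (1 + \<alpha>) = (2 * d) mod 3"
proof (rule ccontr)
  assume H: "\<not> ?thesis"
  have p1: "int p > 1" using P prime_gt_1_nat by auto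
  define U where "U = {1..int p - 1}"
  define S where "S j = {x \<in> U. cls p g x = j}" for j
  have finU: "finite U" unfolding U_def by simp
  have finS: "finite (S j)" for j unfolding S_def using finU by simp
  have unitU: "\<not> int p dvd x" if "x \<in> U" for x
  proof
    assume "int p dvd x"
    moreover have "0 < x" "x < int p" using that unfolding U_def by auto
    ultimately show False using zdvd_imp_le by fastforce
  qed
  have modU: "x mod int p \<in> U" if "\<not> int p dvd x" for x
  proof -
    have "x mod int p \<noteq> 0" using that by (simp add: dvd_eq_mod_eq_0)
    moreover have "0 \<le> x mod int p" "x mod int p < int p" using p1 by auto
    ultimately show ?thesis unfolding U_def by auto
  qed
  have n1: "\<not> int p dvd 1" using pi by (simp add: prime_int_iff)
  have neg_unit: "\<not> int p dvd - z" if "\<not> int p dvd z" for z using that by simp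
  have mult_unit: "\<not> int p dvd x * y" if "\<not> int p dvd x" "\<not> int p dvd y" for x y
    using that pi by (simp add: prime_dvd_mult_iff)
  have cls_neg: "cls p g (- z) = cls p g z" if "\<not> int p dvd z" for z
  proof -
    have "cls p g ((-1) * z) = (cls p g (-1) + cls p g z) mod 3"
      using cls_mult[of "-1" z] that n1 by simp
    thus ?thesis using cls_neg1 cls_lt[of z] by simp
  qed
  have negS0: "(- z) mod int p \<in> S 0" if "\<not> int p dvd z" "cls p g z = 0" for z
  proof -
    have "(- z) mod int p \<in> U" using modU neg_unit that(1) by blast
    moreover have "cls p g ((- z) mod int p) = cls p g (- z)"
      using cls_cong[of "(- z) mod int p" "- z"] that(1) by (simp add: cong_def)
    ultimately show ?thesis unfolding S_def using cls_neg that by simp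
  qed
  have negm1: "[z = 1] (mod int p)" if "(- z) mod int p = int p - 1" for z
  proof -
    have "(int p - 1) mod int p = int p - 1" by (rule mod_pos_pos_trivial) (use p1 in auto)
    hence "[- z = int p - 1] (mod int p)" using that by (simp add: cong_def)
    moreover have "[int p - 1 = - 1] (mod int p)" by (simp add: cong_iff_dvd_diff)
    ultimately have "[- z = - 1] (mod int p)" by (rule cong_trans)
    thus ?thesis by (simp add: cong_minus_minus_iff)
  qed
  define iv where "iv x = (SOME v. [x * v = 1] (mod int p))" for x
  have ivp: "[x * iv x = 1] (mod int p)" if "\<not> int p dvd x" for x
    unfolding iv_def using inverse_int[OF P that] by (rule someI_ex)
  have ivu: "\<not> int p dvd iv x" if "\<not> int p dvd x" for x
  proof
    assume "int p dvd iv x"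
    hence "[x * iv x = 0] (mod int p)" by (simp add: cong_0_iff)
    hence "[1 = 0] (mod int p)" using ivp[OF that] by (meson cong_sym cong_trans)
    thus False using n1 by (simp add: cong_0_iff)
  qed
  define \<psi> where "\<psi> \<alpha> = (if cls p g (1 + \<alpha>) = 0 then (- (1 + \<alpha>)) mod int p
                          else (- (1 + iv \<alpha>)) mod int p)" for \<alpha>
  have facts: "\<not> int p dvd \<alpha> \<and> \<not> int p dvd (1 + \<alpha>) \<and>
      (cls p g (1 + \<alpha>) = 0 \<or> (cls p g (1 + \<alpha>) = d \<and> \<not> int p dvd (1 + iv \<alpha>) \<and>
        cls p g (1 + iv \<alpha>) = 0 \<and> (cls p g \<alpha> + cls p g (iv \<alpha>)) mod 3 = 0))"
    if "\<alpha> \<in> S d" for \<alpha>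
  proof -
    have au: "\<not> int p dvd \<alpha>" using that unitU unfolding S_def by auto
    have ca: "cls p g \<alpha> = d" using that unfolding S_def by auto
    have a1u: "\<not> int p dvd (1 + \<alpha>)"
    proof
      assume "int p dvd (1 + \<alpha>)"
      hence "[\<alpha> = -1] (mod int p)" by (simp add: cong_iff_dvd_diff add.commute)
      hence "cls p g \<alpha> = cls p g (-1)" using n1 by (intro cls_cong) auto
      thus False using ca cls_neg1 d by simp
    qed
    have c1: "cls p g (1 + \<alpha>) \<noteq> (2 * d) mod 3" using H au a1u ca by blast
    have "cls p g (1 + \<alpha>) < 3" by (rule cls_lt)
    hence c1': "cls p g (1 + \<alpha>) = 0 \<or> cls p g (1 + \<alpha>) = d" using c1 d by auto
    show ?thesis
    proof (cases "cls p g (1 + \<alpha>) = 0")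
      case True thus ?thesis using au a1u by simp
    next
      case False
      hence cd: "cls p g (1 + \<alpha>) = d" using c1' by simp
      have v: "[\<alpha> * iv \<alpha> = 1] (mod int p)" using ivp[OF au] .
      have vu: "\<not> int p dvd iv \<alpha>" using ivu[OF au] .
      have "cls p g (\<alpha> * iv \<alpha>) = cls p g 1" using cls_cong[OF v n1] .
      hence s0: "(cls p g \<alpha> + cls p g (iv \<alpha>)) mod 3 = 0" using cls_mult[OF au vu] cls_one by simp
      have eq: "[(1 + \<alpha>) * iv \<alpha> = 1 + iv \<alpha>] (mod int p)"
      proof -
        have "(1 + \<alpha>) * iv \<alpha> = iv \<alpha> + \<alpha> * iv \<alpha>" by (simp add: algebra_simps)
        also have "[iv \<alpha> + \<alpha> * iv \<alpha> = iv \<alpha> + 1] (mod int p)" by (intro cong_add cong_refl v)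
        finally show ?thesis by (simp add: add.commute)
      qed
      have pu: "\<not> int p dvd (1 + \<alpha>) * iv \<alpha>" using mult_unit[OF a1u vu] .
      have u1v: "\<not> int p dvd (1 + iv \<alpha>)"
      proof
        assume "int p dvd (1 + iv \<alpha>)"
        hence "[(1 + \<alpha>) * iv \<alpha> = 0] (mod int p)" using eq
          by (meson cong_0_iff cong_trans)
        thus False using pu by (simp add: cong_0_iff)
      qed
      have "cls p g (1 + iv \<alpha>) = cls p g ((1 + \<alpha>) * iv \<alpha>)"
        using cls_cong[OF eq u1v] by simp
      also have "\<dots> = (cls p g (1 + \<alpha>) + cls p g (iv \<alpha>)) mod 3" using cls_mult[OF a1u vu] .
      finally have "cls p g (1 + iv \<alpha>) = 0" using cd ca s0 by simp
      thus ?thesis using au a1u cd u1v s0 by simp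
    qed
  qed
  have psiS: "\<psi> \<alpha> \<in> S 0 - {int p - 1}" if "\<alpha> \<in> S d" for \<alpha>
  proof -
    note f = facts[OF that]
    show ?thesis
    proof (cases "cls p g (1 + \<alpha>) = 0")
      case True
      hence ps: "\<psi> \<alpha> = (- (1 + \<alpha>)) mod int p" unfolding \<psi>_def by simp
      have "\<psi> \<alpha> \<in> S 0" unfolding ps using negS0 f True by blast
      moreover have "\<psi> \<alpha> \<noteq> int p - 1"
      proof
        assume "\<psi> \<alpha> = int p - 1"
        hence "[1 + \<alpha> = 1] (mod int p)" using negm1 ps by simp
        hence "[\<alpha> = 0] (mod int p)" by (metis add.right_neutral cong_add_lcancel)
        thus False using f by (simp add: cong_0_iff)
      qed
      ultimately show ?thesis by simp
    next
      case False
      hence ps: "\<psi> \<alpha> = (- (1 + iv \<alpha>)) mod int p" unfolding \<psi>_def by simp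
      have f2: "\<not> int p dvd (1 + iv \<alpha>)" "cls p g (1 + iv \<alpha>) = 0" using f False by auto
      have "\<psi> \<alpha> \<in> S 0" unfolding ps using negS0 f2 by blast
      moreover have "\<psi> \<alpha> \<noteq> int p - 1"
      proof
        assume "\<psi> \<alpha> = int p - 1"
        hence "[1 + iv \<alpha> = 1] (mod int p)" using negm1 ps by simp
        hence "[iv \<alpha> = 0] (mod int p)" by (metis add.right_neutral cong_add_lcancel)
        thus False using ivu f by (simp add: cong_0_iff)
      qed
      ultimately show ?thesis by simp
    qed
  qed
  have psi_cong: "[z = z'] (mod int p)" if "(- z) mod int p = (- z') mod int p" for z z'
  proof -
    have "[- z = - z'] (mod int p)" using that by (simp add: cong_def)
    thus ?thesis by (simp add: cong_minus_minus_iff)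
  qed
  have Srange: "0 \<le> x \<and> x < int p" if "x \<in> S j" for x j
    using that unfolding S_def U_def by auto
  have d_ne: "\<not> (cls p g \<alpha> = cls p g (iv \<alpha>'))" if "\<alpha> \<in> S d" "\<alpha>' \<in> S d"
      "(cls p g \<alpha>' + cls p g (iv \<alpha>')) mod 3 = 0" for \<alpha> \<alpha>'
  proof
    assume "cls p g \<alpha> = cls p g (iv \<alpha>')"
    moreover have "cls p g \<alpha> = d" "cls p g \<alpha>' = d" using that unfolding S_def by auto
    ultimately have "(d + d) mod 3 = 0" using that(3) by simp
    thus False using d by presburger
  qed
  have inj: "inj_on \<psi> (S d)"
  proof (rule inj_onI)
    fix \<alpha> \<alpha>' assume a: "\<alpha> \<in> S d" and a': "\<alpha>' \<in> S d" and e: "\<psi> \<alpha> = \<psi> \<alpha>'"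
    note f = facts[OF a] and f' = facts[OF a']
    have au: "\<not> int p dvd \<alpha>" and au': "\<not> int p dvd \<alpha>'" using f f' by auto
    show "\<alpha> = \<alpha>'"
    proof (cases "cls p g (1 + \<alpha>) = 0"; cases "cls p g (1 + \<alpha>') = 0")
      assume c: "cls p g (1 + \<alpha>) = 0" and c': "cls p g (1 + \<alpha>') = 0"
      have "[1 + \<alpha> = 1 + \<alpha>'] (mod int p)" using e c c' psi_cong unfolding \<psi>_def by simp
      hence "[\<alpha> = \<alpha>'] (mod int p)" by (simp add: cong_add_lcancel)
      thus ?thesis using Srange a a' cong_range_eq by blast
    next
      assume c: "cls p g (1 + \<alpha>) = 0" and c': "cls p g (1 + \<alpha>') \<noteq> 0"
      have "[1 + \<alpha> = 1 + iv \<alpha>'] (mod int p)" using e c c' psi_cong unfolding \<psi>_def by simp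
      hence "[\<alpha> = iv \<alpha>'] (mod int p)" by (simp add: cong_add_lcancel)
      hence "cls p g \<alpha> = cls p g (iv \<alpha>')" using ivu[OF au'] by (rule cls_cong)
      moreover have "(cls p g \<alpha>' + cls p g (iv \<alpha>')) mod 3 = 0" using f' c' by auto
      ultimately have False using d_ne[OF a a'] by metis
      thus ?thesis ..
    next
      assume c: "cls p g (1 + \<alpha>) \<noteq> 0" and c': "cls p g (1 + \<alpha>') = 0"
      have "[1 + iv \<alpha> = 1 + \<alpha>'] (mod int p)" using e c c' psi_cong unfolding \<psi>_def by simp
      hence "[\<alpha>' = iv \<alpha>] (mod int p)" by (simp add: cong_add_lcancel cong_sym_eq)
      hence "cls p g \<alpha>' = cls p g (iv \<alpha>)" using ivu[OF au] by (rule cls_cong)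
      moreover have "(cls p g \<alpha> + cls p g (iv \<alpha>)) mod 3 = 0" using f c by auto
      ultimately have False using d_ne[OF a' a] by metis
      thus ?thesis ..
    next
      assume c: "cls p g (1 + \<alpha>) \<noteq> 0" and c': "cls p g (1 + \<alpha>') \<noteq> 0"
      have "[1 + iv \<alpha> = 1 + iv \<alpha>'] (mod int p)" using e c c' psi_cong unfolding \<psi>_def by simp
      hence vv: "[iv \<alpha> = iv \<alpha>'] (mod int p)" by (simp add: cong_add_lcancel)
      have "[\<alpha> = \<alpha> * (\<alpha>' * iv \<alpha>')] (mod int p)"
        using cong_mult[OF cong_refl[of \<alpha>] ivp[OF au']] by (simp add: cong_sym_eq)
      also have "\<alpha> * (\<alpha>' * iv \<alpha>') = \<alpha>' * (\<alpha> * iv \<alpha>')" by (simp add: algebra_simps)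
      also have "[\<alpha>' * (\<alpha> * iv \<alpha>') = \<alpha>' * (\<alpha> * iv \<alpha>)] (mod int p)"
        by (intro cong_mult cong_refl) (simp add: cong_sym vv)
      also have "[\<alpha>' * (\<alpha> * iv \<alpha>) = \<alpha>' * 1] (mod int p)"
        by (intro cong_mult cong_refl ivp au)
      finally have "[\<alpha> = \<alpha>'] (mod int p)" by simp
      thus ?thesis using Srange a a' cong_range_eq by blast
    qed
  qed
  have c1: "card (S d) \<le> card (S 0 - {int p - 1})"
    using inj psiS finS by (intro card_inj_on_le[of \<psi>]) auto
  have pm1: "int p - 1 \<in> S 0"
  proof -
    have "int p - 1 \<in> U" unfolding U_def using p1 by auto
    moreover have "cls p g (int p - 1) = cls p g (-1)"
      using n1 by (intro cls_cong) (auto simp: cong_iff_dvd_diff)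
    ultimately show ?thesis unfolding S_def using cls_neg1 by simp
  qed
  have c2: "card (S 0 - {int p - 1}) < card (S 0)"
  proof -
    have "card (S 0) > 0" using pm1 finS[of 0] card_gt_0_iff by blast
    thus ?thesis using pm1 finS by simp
  qed
  define \<phi> where "\<phi> x = (int g ^ d * x) mod int p" for x
  have gdu: "\<not> int p dvd int g ^ d" using g_unit pi prime_dvd_power by blast
  have cgd: "cls p g (int g ^ d) = d" using cls_eq[of d "int g ^ d"] d by auto
  have phiS: "\<phi> x \<in> S d" if "x \<in> S 0" for x
  proof -
    have xu: "\<not> int p dvd x" using that unitU unfolding S_def by auto
    have gx: "\<not> int p dvd int g ^ d * x" using mult_unit[OF gdu xu] .
    have "\<phi> x \<in> U" unfolding \<phi>_def using modU gx by blast
    moreover have "cls p g (\<phi> x) = cls p g (int g ^ d * x)"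
      unfolding \<phi>_def using cls_cong[of "(int g ^ d * x) mod int p" "int g ^ d * x"] gx by (simp add: cong_def)
    moreover have "cls p g (int g ^ d * x) = d"
      using cls_mult[OF gdu xu] cgd that d unfolding S_def by auto
    ultimately show ?thesis unfolding S_def by simp
  qed
  have inj2: "inj_on \<phi> (S 0)"
  proof (rule inj_onI)
    fix x y assume x: "x \<in> S 0" and y: "y \<in> S 0" and e: "\<phi> x = \<phi> y"
    have "[int g ^ d * x = int g ^ d * y] (mod int p)" using e unfolding \<phi>_def by (simp add: cong_def)
    hence "[x = y] (mod int p)" using cong_mult_lcancel[OF unit_cop[OF gdu]] by blast
    thus "x = y" using Srange x y cong_range_eq by blast
  qed
  have c3: "card (S 0) \<le> card (S d)"
    using inj2 phiS finS by (intro card_inj_on_le[of \<phi>]) auto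
  show False using c1 c2 c3 by simp
qed

lemma cls_neg_ctx: "\<not> int p dvd z \<Longrightarrow> cls p g (- z) = cls p g z"
proof -
  assume z: "\<not> int p dvd z"
  have n1: "\<not> int p dvd -1" using pi by (simp add: prime_int_iff)
  have "cls p g ((-1) * z) = (cls p g (-1) + cls p g z) mod 3"
    using cls_mult[OF n1 z] by simp
  thus ?thesis using cls_neg1 cls_lt[of z] by simp
qed

lemma bin:
  assumes v: "\<not> int p dvd v" and w: "\<not> int p dvd w" and c: "cls p g v = cls p g w"
  shows "\<exists>y. int p dvd w + v * y ^ 3"
proof -
  have w': "\<not> int p dvd - w" using w by simp
  have "cls p g v = cls p g (- w)" using c cls_neg_ctx[OF w] by simp
  then obtain y where "[v * y ^ 3 = - w] (mod int p)" using cls_match[OF v w'] by blast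
  hence "int p dvd v * y ^ 3 - (- w)" by (simp add: cong_iff_dvd_diff)
  hence "int p dvd w + v * y ^ 3" by (simp add: add.commute)
  thus ?thesis by blast
qed

lemma ternary1:
  assumes u1: "\<not> int p dvd u1" and u2: "\<not> int p dvd u2" and u3: "\<not> int p dvd u3"
  shows "\<exists>x y z. (\<not> int p dvd x \<or> \<not> int p dvd y \<or> \<not> int p dvd z) \<and>
           int p dvd u1 * x ^ 3 + u2 * y ^ 3 + u3 * z ^ 3"
proof -
  have n1: "\<not> int p dvd 1" using pi by (simp add: prime_int_iff)
  consider "cls p g u1 = cls p g u2" | "cls p g u1 = cls p g u3" | "cls p g u2 = cls p g u3"
    | "cls p g u1 \<noteq> cls p g u2" "cls p g u1 \<noteq> cls p g u3" "cls p g u2 \<noteq> cls p g u3" by blast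
  thus ?thesis
  proof cases
    case 1
    then obtain y where "int p dvd u1 + u2 * y ^ 3" using bin[OF u2 u1 1[symmetric]] by blast
    hence "int p dvd u1 * 1 ^ 3 + u2 * y ^ 3 + u3 * 0 ^ 3" by simp
    thus ?thesis using n1 by blast
  next
    case 2
    then obtain z where "int p dvd u1 + u3 * z ^ 3" using bin[OF u3 u1 2[symmetric]] by blast
    hence "int p dvd u1 * 1 ^ 3 + u2 * 0 ^ 3 + u3 * z ^ 3" by simp
    thus ?thesis using n1 by blast
  next
    case 3
    then obtain z where "int p dvd u2 + u3 * z ^ 3" using bin[OF u3 u2 3[symmetric]] by blast
    hence "int p dvd u1 * 0 ^ 3 + u2 * 1 ^ 3 + u3 * z ^ 3" by simp
    thus ?thesis using n1 by blast
  next
    case 4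
    obtain iv where iv: "[u1 * iv = 1] (mod int p)" using inverse_int[OF P u1] by blast
    have ivu: "\<not> int p dvd iv"
    proof
      assume "int p dvd iv"
      hence "[u1 * iv = 0] (mod int p)" by (simp add: cong_0_iff)
      hence "[1 = 0] (mod int p)" using iv by (meson cong_sym cong_trans)
      thus False using n1 by (simp add: cong_0_iff)
    qed
    define v2 where "v2 = u2 * iv"
    define v3 where "v3 = u3 * iv"
    have v2u: "\<not> int p dvd v2" unfolding v2_def using u2 ivu pi by (simp add: prime_dvd_mult_iff)
    have v3u: "\<not> int p dvd v3" unfolding v3_def using u3 ivu pi by (simp add: prime_dvd_mult_iff)
    have e2: "[u1 * v2 = u2] (mod int p)"
    proof -
      have "u1 * v2 = u2 * (u1 * iv)" unfolding v2_def by (simp add: algebra_simps)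
      also have "[u2 * (u1 * iv) = u2 * 1] (mod int p)" by (intro cong_mult cong_refl iv)
      finally show ?thesis by simp
    qed
    have e3: "[u1 * v3 = u3] (mod int p)"
    proof -
      have "u1 * v3 = u3 * (u1 * iv)" unfolding v3_def by (simp add: algebra_simps)
      also have "[u3 * (u1 * iv) = u3 * 1] (mod int p)" by (intro cong_mult cong_refl iv)
      finally show ?thesis by simp
    qed
    have c2: "cls p g u2 = (cls p g u1 + cls p g v2) mod 3"
      using cls_cong[OF e2 u2] cls_mult[OF u1 v2u] by simp
    have c3: "cls p g u3 = (cls p g u1 + cls p g v3) mod 3"
      using cls_cong[OF e3 u3] cls_mult[OF u1 v3u] by simp
    define d where "d = cls p g v2"
    have l1: "cls p g u1 < 3" and l2: "cls p g v2 < 3" and l3: "cls p g v3 < 3" by (rule cls_lt)+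
    have dd: "d = 1 \<or> d = 2" and d3: "cls p g v3 = (2 * d) mod 3"
      using arith3[OF l1 l2 l3] 4 c2 c3 unfolding d_def by auto
    obtain \<alpha> where au: "\<not> int p dvd \<alpha>" and a1u: "\<not> int p dvd (1 + \<alpha>)"
      and ca: "cls p g \<alpha> = d" and ca1: "cls p g (1 + \<alpha>) = (2 * d) mod 3"
      using cyclo[OF dd] by blast
    have "cls p g v2 = cls p g \<alpha>" using ca d_def by simp
    then obtain y where y: "[v2 * y ^ 3 = \<alpha>] (mod int p)" using cls_match[OF v2u au] by blast
    have na1: "\<not> int p dvd - (1 + \<alpha>)" using a1u by (simp only: dvd_minus_iff not_False_eq_True)
    have "cls p g v3 = cls p g (- (1 + \<alpha>))" using d3 ca1 cls_neg_ctx[OF a1u] by simp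
    then obtain z where z: "[v3 * z ^ 3 = - (1 + \<alpha>)] (mod int p)" using cls_match[OF v3u na1] by blast
    have "[u1 * 1 ^ 3 + u2 * y ^ 3 + u3 * z ^ 3 = u1 + (u1 * v2) * y ^ 3 + (u1 * v3) * z ^ 3] (mod int p)"
      by (intro cong_add cong_mult cong_refl) (simp_all add: cong_sym e2 e3)
    also have "u1 + (u1 * v2) * y ^ 3 + (u1 * v3) * z ^ 3 = u1 * (1 + v2 * y ^ 3 + v3 * z ^ 3)"
      by (simp add: algebra_simps)
    also have "[u1 * (1 + v2 * y ^ 3 + v3 * z ^ 3) = u1 * (1 + \<alpha> + - (1 + \<alpha>))] (mod int p)"
      by (intro cong_mult cong_add cong_refl y z)
    finally have "int p dvd u1 * 1 ^ 3 + u2 * y ^ 3 + u3 * z ^ 3" by (simp add: cong_0_iff)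
    thus ?thesis using n1 by blast
  qed
qed
end


lemma ternary:
  fixes p :: nat and u1 u2 u3 :: int
  assumes P: "prime p" and p3: "p \<noteq> 3"
    and u1: "\<not> int p dvd u1" and u2: "\<not> int p dvd u2" and u3: "\<not> int p dvd u3"
  shows "\<exists>x y z. (\<not> int p dvd x \<or> \<not> int p dvd y \<or> \<not> int p dvd z) \<and>
           int p dvd u1 * x ^ 3 + u2 * y ^ 3 + u3 * z ^ 3"
proof -
  have pi: "prime (int p)" using P by simp
  have n1: "\<not> int p dvd 1" using pi by (simp add: prime_int_iff)
  have "p mod 3 \<noteq> 0"
  proof
    assume "p mod 3 = 0"
    hence "3 dvd p" by presburger
    have "prime (3::nat)" unfolding prime_nat_iff'
    proof (intro conjI ballI)
      fix n :: nat assume "n \<in> {2..<3}"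
      hence "n = 2" by auto
      thus "\<not> n dvd 3" by simp
    qed simp
    hence "3 = p" using \<open>3 dvd p\<close> P primes_dvd_imp_eq by blast
    thus False using p3 by simp
  qed
  hence "p mod 3 = 1 \<or> p mod 3 = 2" by presburger
  thus ?thesis
  proof
    assume "p mod 3 = 1"
    moreover obtain g where "residue_primroot p g" using prime_primitive_root_exists[OF prime_gt_1_nat[OF P] P] by blast
    ultimately show ?thesis using ternary1[OF P _ _ u1 u2 u3] by blast
  next
    assume m2: "p mod 3 = 2"
    obtain iv where iv: "[u3 * iv = 1] (mod int p)" using inverse_int[OF P u3] by blast
    have ivu: "\<not> int p dvd iv"
    proof
      assume "int p dvd iv"
      hence "[u3 * iv = 0] (mod int p)" by (simp add: cong_0_iff)
      hence "[1 = 0] (mod int p)" using iv by (meson cong_sym cong_trans)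
      thus False using n1 by (simp add: cong_0_iff)
    qed
    have "\<not> int p dvd - u1 * iv" using u1 ivu pi by (simp add: prime_dvd_mult_iff)
    then obtain z where z: "[z ^ 3 = - u1 * iv] (mod int p)" using all_cubes_2[OF P m2] by blast
    have "[u1 * 1 ^ 3 + u2 * 0 ^ 3 + u3 * z ^ 3 = u1 * 1 ^ 3 + u2 * 0 ^ 3 + u3 * (- u1 * iv)] (mod int p)"
      by (intro cong_add cong_mult cong_refl z)
    also have "u1 * 1 ^ 3 + u2 * 0 ^ 3 + u3 * (- u1 * iv) = u1 + u3 * (- u1 * iv)" by simp
    also have "u1 + u3 * (- u1 * iv) = u1 - u1 * (u3 * iv)" by (simp add: algebra_simps)
    also have "[u1 - u1 * (u3 * iv) = u1 - u1 * 1] (mod int p)"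
      by (intro cong_diff cong_mult cong_refl iv)
    finally have "int p dvd u1 * 1 ^ 3 + u2 * 0 ^ 3 + u3 * z ^ 3" by (simp add: cong_0_iff)
    thus ?thesis using n1 by blast
  qed
qed


lemma three_elems:
  assumes "finite A" "card A \<ge> 3"
  shows "\<exists>i1 i2 i3. i1 \<in> A \<and> i2 \<in> A \<and> i3 \<in> A \<and> i1 \<noteq> i2 \<and> i1 \<noteq> i3 \<and> i2 \<noteq> i3"
proof -
  have "A \<noteq> {}" using assms by auto
  then obtain i1 where i1: "i1 \<in> A" by blast
  have c2: "card (A - {i1}) \<ge> 2" using assms i1 by simp
  have "A - {i1} \<noteq> {}"
  proof
    assume "A - {i1} = {}"
    hence "card (A - {i1}) = 0" by (simp only: card.empty)
    thus False using c2 by simp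
  qed
  then obtain i2 where i2: "i2 \<in> A - {i1}" by blast
  have c1: "card (A - {i1} - {i2}) \<ge> 1" using assms i1 i2 by (simp add: card_Diff_singleton)
  have "A - {i1} - {i2} \<noteq> {}"
  proof
    assume "A - {i1} - {i2} = {}"
    hence "card (A - {i1} - {i2}) = 0" by (simp only: card.empty)
    thus False using c1 by simp
  qed
  then obtain i3 where i3: "i3 \<in> A - {i1} - {i2}" by blast
  show ?thesis using i1 i2 i3 by blast
qed

lemma pigeon3:
  fixes v :: "nat \<Rightarrow> nat"
  shows "\<exists>i1 i2 i3. i1 < 7 \<and> i2 < 7 \<and> i3 < 7 \<and> i1 \<noteq> i2 \<and> i1 \<noteq> i3 \<and> i2 \<noteq> i3 \<and>
     v i1 mod 3 = v i2 mod 3 \<and> v i1 mod 3 = v i3 mod 3"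
proof -
  define F where "F j = {i \<in> {..<7::nat}. v i mod 3 = j}" for j
  have "{..<7} \<subseteq> F 0 \<union> F 1 \<union> F 2" unfolding F_def by auto
  hence "card {..<7::nat} \<le> card (F 0 \<union> F 1 \<union> F 2)"
    by (intro card_mono) (auto simp: F_def)
  also have "\<dots> \<le> card (F 0 \<union> F 1) + card (F 2)" by (rule card_Un_le)
  also have "card (F 0 \<union> F 1) \<le> card (F 0) + card (F 1)" by (rule card_Un_le)
  hence "card (F 0 \<union> F 1) + card (F 2) \<le> card (F 0) + card (F 1) + card (F 2)" by (rule add_right_mono)
  finally have s7: "7 \<le> card (F 0) + card (F 1) + card (F 2)" by simp
  have "card (F 0) \<ge> 3 \<or> card (F 1) \<ge> 3 \<or> card (F 2) \<ge> 3"
  proof (rule ccontr)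
    assume "\<not> (card (F 0) \<ge> 3 \<or> card (F 1) \<ge> 3 \<or> card (F 2) \<ge> 3)"
    hence "card (F 0) \<le> 2" "card (F 1) \<le> 2" "card (F 2) \<le> 2" by auto
    thus False using s7 by linarith
  qed
  then obtain j where j: "card (F j) \<ge> 3" by blast
  have "finite (F j)" unfolding F_def by simp
  then obtain i1 i2 i3 where "i1 \<in> F j" "i2 \<in> F j" "i3 \<in> F j" "i1 \<noteq> i2" "i1 \<noteq> i3" "i2 \<noteq> i3"
    using three_elems j by blast
  hence "i1 < 7 \<and> i2 < 7 \<and> i3 < 7 \<and> i1 \<noteq> i2 \<and> i1 \<noteq> i3 \<and> i2 \<noteq> i3 \<and>
     v i1 mod 3 = v i2 mod 3 \<and> v i1 mod 3 = v i3 mod 3" unfolding F_def by auto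
  thus ?thesis by blast
qed

lemma shift3:
  fixes x y :: nat
  assumes "x mod 3 = y mod 3" "x \<le> y"
  shows "x + 3 * ((y - x) div 3) = y"
proof -
  have "3 dvd y - x" using assms mod_eq_dvd_iff_nat[of x y 3] by simp
  hence "3 * ((y - x) div 3) = y - x" by (rule dvd_mult_div_cancel)
  thus ?thesis using assms(2) by simp
qed

lemma base:
  fixes p r :: nat and a :: "nat \<Rightarrow> int"
  assumes P: "prime p" and p3: "p \<noteq> 3" and r: "r \<ge> 7" and a: "\<forall>i<r. a i \<noteq> 0"
  shows "\<exists>i e u w. i < r \<and> a i * w i ^ 3 = int p ^ e * u \<and> \<not> int p dvd u \<and>
           int p ^ (1 + e) dvd diag_cubic r a w"
proof -
  have pi: "prime (int p)" using P by simp
  have nu: "\<not> is_unit (int p)" using pi not_prime_unit by blast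
  define v where "v i = multiplicity (int p) (a i)" for i
  define b where "b i = a i div int p ^ v i" for i
  have ab: "a i = int p ^ v i * b i" "\<not> int p dvd b i" if "i < r" for i
  proof -
    have "a i \<noteq> 0" using a that by blast
    thus "\<not> int p dvd b i" unfolding b_def v_def using multiplicity_decompose[of "a i" "int p"] nu by blast
    show "a i = int p ^ v i * b i" unfolding b_def v_def using multiplicity_dvd[of "int p" "a i"] by simp
  qed
  obtain i1 i2 i3 where ii: "i1 < 7" "i2 < 7" "i3 < 7" "i1 \<noteq> i2" "i1 \<noteq> i3" "i2 \<noteq> i3"
     and vv: "v i1 mod 3 = v i2 mod 3" "v i1 mod 3 = v i3 mod 3"
    using pigeon3[of v] by blast
  have ir: "i1 < r" "i2 < r" "i3 < r" using ii r by auto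
  define V where "V = max (v i1) (max (v i2) (v i3))"
  define s1 where "s1 = (V - v i1) div 3"
  define s2 where "s2 = (V - v i2) div 3"
  define s3 where "s3 = (V - v i3) div 3"
  have "V = v i1 \<or> V = v i2 \<or> V = v i3" unfolding V_def by (auto simp: max_def)
  hence Vm: "V mod 3 = v i1 mod 3" using vv by auto
  have le: "v i1 \<le> V" "v i2 \<le> V" "v i3 \<le> V" unfolding V_def by auto
  have sh1: "v i1 + 3 * s1 = V" unfolding s1_def using Vm le by (intro shift3) auto
  have sh2: "v i2 + 3 * s2 = V" unfolding s2_def using Vm vv le by (intro shift3) auto
  have sh3: "v i3 + 3 * s3 = V" unfolding s3_def using Vm vv le by (intro shift3) auto
  obtain x y z where xyz: "\<not> int p dvd x \<or> \<not> int p dvd y \<or> \<not> int p dvd z"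
      and dv: "int p dvd b i1 * x ^ 3 + b i2 * y ^ 3 + b i3 * z ^ 3"
    using ternary[OF P p3 ab(2)[OF ir(1)] ab(2)[OF ir(2)] ab(2)[OF ir(3)]] by blast
  have trm: "a i * (int p ^ s * t) ^ 3 = int p ^ V * (b i * t ^ 3)" if "i < r" "v i + 3 * s = V" for i s t
  proof -
    have e1: "(int p ^ s * t) ^ 3 = int p ^ (s * 3) * t ^ 3" by (simp add: power_mult_distrib power_mult)
    have e2: "int p ^ v i * int p ^ (s * 3) = int p ^ V" using that(2) by (simp add: power_add[symmetric] mult.commute)
    have "a i * (int p ^ s * t) ^ 3 = (int p ^ v i * int p ^ (s * 3)) * (b i * t ^ 3)"
      unfolding e1 ab(1)[OF that(1)] by (simp only: mult_ac)
    thus ?thesis unfolding e2 .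
  qed
  define w0 where "w0 = (\<lambda>_::nat. 0::int)"
  define w1 where "w1 = w0(i1 := int p ^ s1 * x)"
  define w2 where "w2 = w1(i2 := int p ^ s2 * y)"
  define w where "w = w2(i3 := int p ^ s3 * z)"
  have C0: "diag_cubic r a w0 = 0" unfolding diag_cubic_def w0_def by simp
  have "diag_cubic r a w = int p ^ V * (b i1 * x ^ 3 + b i2 * y ^ 3 + b i3 * z ^ 3)"
  proof -
    have "diag_cubic r a w1 = int p ^ V * (b i1 * x ^ 3)"
      unfolding w1_def using diag_upd[OF ir(1), of a w0] C0 trm[OF ir(1) sh1] by (simp add: w0_def)
    moreover have "diag_cubic r a w2 = diag_cubic r a w1 + int p ^ V * (b i2 * y ^ 3)"
      unfolding w2_def using diag_upd[OF ir(2), of a w1] trm[OF ir(2) sh2] ii by (simp add: w1_def w0_def)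
    moreover have "diag_cubic r a w = diag_cubic r a w2 + int p ^ V * (b i3 * z ^ 3)"
      unfolding w_def using diag_upd[OF ir(3), of a w2] trm[OF ir(3) sh3] ii by (simp add: w2_def w1_def w0_def)
    ultimately show ?thesis by (simp add: algebra_simps)
  qed
  hence Cdv: "int p ^ (1 + V) dvd diag_cubic r a w"
  proof -
    assume h: "diag_cubic r a w = int p ^ V * (b i1 * x ^ 3 + b i2 * y ^ 3 + b i3 * z ^ 3)"
    obtain q where q: "b i1 * x ^ 3 + b i2 * y ^ 3 + b i3 * z ^ 3 = int p * q" using dv by blast
    have "diag_cubic r a w = int p ^ (1 + V) * q" unfolding h q by (simp add: power_add)
    thus ?thesis by simp
  qed
  have w_i1: "w i1 = int p ^ s1 * x" unfolding w_def w2_def w1_def using ii by simp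
  have w_i2: "w i2 = int p ^ s2 * y" unfolding w_def w2_def using ii by simp
  have w_i3: "w i3 = int p ^ s3 * z" unfolding w_def by simp
  have unit: "\<not> int p dvd b i * t ^ 3" if "i < r" "\<not> int p dvd t" for i t
    using ab(2)[OF that(1)] that(2) pi by (simp add: prime_dvd_mult_iff prime_dvd_power_iff)
  from xyz show ?thesis
  proof (elim disjE)
    assume "\<not> int p dvd x"
    hence "i1 < r \<and> a i1 * w i1 ^ 3 = int p ^ V * (b i1 * x ^ 3) \<and> \<not> int p dvd (b i1 * x ^ 3) \<and>
           int p ^ (1 + V) dvd diag_cubic r a w"
      using ir(1) trm[OF ir(1) sh1] w_i1 unit[OF ir(1)] Cdv by simp
    thus ?thesis by blast
  next
    assume "\<not> int p dvd y"
    hence "i2 < r \<and> a i2 * w i2 ^ 3 = int p ^ V * (b i2 * y ^ 3) \<and> \<not> int p dvd (b i2 * y ^ 3) \<and>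
           int p ^ (1 + V) dvd diag_cubic r a w"
      using ir(2) trm[OF ir(2) sh2] w_i2 unit[OF ir(2)] Cdv by simp
    thus ?thesis by blast
  next
    assume "\<not> int p dvd z"
    hence "i3 < r \<and> a i3 * w i3 ^ 3 = int p ^ V * (b i3 * z ^ 3) \<and> \<not> int p dvd (b i3 * z ^ 3) \<and>
           int p ^ (1 + V) dvd diag_cubic r a w"
      using ir(3) trm[OF ir(3) sh3] w_i3 unit[OF ir(3)] Cdv by simp
    thus ?thesis by blast
  qed
qed


theorem corollary1p7:
  fixes p r :: nat and a :: "nat \<Rightarrow> int"
  assumes "prime p" and "p \<noteq> 3" and "r \<ge> 7"
    and "(\<Prod>i<r. a i) \<noteq> 0"
  shows "padic_dense p (ratio_set (diag_cubic r a))"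
proof -
  have a: "\<forall>i<r. a i \<noteq> 0" using assms(4) by (auto simp: prod_zero_iff)
  obtain i e u w where "i < r" "a i * w i ^ 3 = int p ^ e * u" "\<not> int p dvd u"
      "int p ^ (1 + e) dvd diag_cubic r a w"
    using base[OF assms(1,2,3) a] by blast
  thus ?thesis using dense_from_zero[OF assms(1,2)] by blast
qed

end
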